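(* Let $q$ be a prime power, $m\ge1$, $g_1,\dots,g_n\in\mathbb{F}_{q^m}$ linearly independent over $\mathbb{F}_q$, $r_1,\dots,r_n\in\mathbb{F}_{q^m}$, and for $0\le i\le n$ let $\mathfrak M_i$ be the interpolation module for $(g_1,\dots,g_i)$ and $(r_1,\dots,r_i)$ (defined in the context). Let $1\le i\le n$ and let $P,K,N,D\in\mathcal{L}_q(x,q^m)$ be such that the rows $[P(x)\ \ -K(x)]$ and $[N(x)\ \ -D(x)]$ form a basis of $\mathfrak M_{i-1}$. Put $\Gamma_i:=P(g_i)-K(r_i)$ and $\Delta_i:=N(g_i)-D(r_i)$. If $\Gamma_i\neq0$, then the rows of $$\begin{bmatrix}x^q-\Gamma_i^{q-1}x&0\\\Delta_ix&-\Gamma_ix\end{bmatrix}\circ\begin{bmatrix}P(x)&-K(x)\\N(x)&-D(x)\end{bmatrix}$$ form a basis of $\mathfrak M_i$. If $\Delta_i\neq0$, then the rows of $$\begin{bmatrix}\Delta_ix&-\Gamma_ix\\0&x^q-\Delta_i^{q-1}x\end{bmatrix}\circ\begin{bmatrix}P(x)&-K(x)\\N(x)&-D(x)\end{bmatrix}$$ form a basis of $\mathfrak M_i$.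
   Context: Write $[i]:=q^i$. A $q$-linearized polynomial is $f(x)=\sum_{j=0}^{d}a_jx^{[j]}$, $a_j\in\mathbb{F}_{q^m}$; $\mathcal{L}_q(x,q^m)$ is the ring of these under addition and composition $\circ$. For $\mathbb{F}_q$-linearly independent $g_1,\dots,g_i$, $\Pi_i(x):=\prod_{u\in\langle g_1,\dots,g_i\rangle}(x-u)$ ($\mathbb{F}_q$-span), which lies in $\mathcal{L}_q(x,q^m)$, and $\Lambda_i(x):=\sum_{l=1}^i(-1)^{i-l}r_l\det(\mathfrak D_l)/\det(M_i(g_1,\dots,g_i))$, where $M_i(v_1,\dots,v_s)$ is the $i\times s$ matrix with $(j,l)$ entry $v_l^{[j-1]}$ and $\mathfrak D_l$ is $M_i(g_1,\dots,g_i,x)$ with the $l$-th column removed; $\Lambda_i\in\mathcal{L}_q(x,q^m)$ and $\Lambda_i(g_l)=r_l$ for $l\le i$. $\mathcal{L}_q(x,q^m)^2$ is a left module via $h\circ[f_1\ f_2]=[h\circ f_1\ \ h\circ f_2]$. The interpolation module $\mathfrak M_i$ is the set of all $\beta\circ[\Pi_i(x)\ \ 0]+\gamma\circ[-\Lambda_i(x)\ \ x]$ with $\beta,\gamma\in\mathcal{L}_q(x,q^m)$; for $i=0$ we use $\Pi_0(x)=x$, $\Lambda_0=0$, so $\mathfrak M_0=\mathcal{L}_q(x,q^m)^2$. A basis of a submodule is a generating set $\{f^{(1)},\dots,f^{(s)}\}$ such that $\sum a_l\circ f^{(l)}=0$ with $a_l\in\mathcal{L}_q(x,q^m)$ implies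 all $a_l=0$. Composition of a $2\times2$ matrix with a $2\times2$ matrix over $\mathcal{L}_q(x,q^m)$ is defined like matrix multiplication with products replaced by composition. *)

theory Defs
  imports "HOL-Computational_Algebra.Polynomial" "HOL-Computational_Algebra.Primes"
    "Jordan_Normal_Form.Determinant"
begin

(* Ambient field F_{q^m}: a finite field type 'a with CARD('a) = Q^m.
   The subfield F_q is {x. x^Q = x}. Polynomials are 'a poly; composition is pcompose. *)

definition Fq :: "nat \<Rightarrow> 'a::field set" where
  "Fq Q = {x. x ^ Q = x}"

definition linpolys :: "nat \<Rightarrow> 'a::field poly set" where
  "linpolys Q = {f. \<forall>k. coeff f k \<noteq> 0 \<longrightarrow> (\<exists>j. k = Q ^ j)}"

definition qpow :: "nat \<Rightarrow> nat \<Rightarrow> 'a::field poly" where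
  "qpow Q j = monom 1 (Q ^ j)"

definition Fq_lin_indep :: "nat \<Rightarrow> nat \<Rightarrow> (nat \<Rightarrow> 'a::field) \<Rightarrow> bool" where
  "Fq_lin_indep Q n g \<longleftrightarrow> (\<forall>c. (\<forall>l\<in>{1..n}. c l \<in> Fq Q) \<and> (\<Sum>l=1..n. c l * g l) = 0
      \<longrightarrow> (\<forall>l\<in>{1..n}. c l = 0))"

definition Fq_span :: "nat \<Rightarrow> nat \<Rightarrow> (nat \<Rightarrow> 'a::field) \<Rightarrow> 'a set" where
  "Fq_span Q i g = {(\<Sum>l=1..i. c l * g l) | c. \<forall>l\<in>{1..i}. c l \<in> Fq Q}"

definition Pi_poly :: "nat \<Rightarrow> nat \<Rightarrow> (nat \<Rightarrow> 'a::field) \<Rightarrow> 'a poly" where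
  "Pi_poly Q i g = (\<Prod>u\<in>Fq_span Q i g. [:- u, 1:])"

(* Moore matrix M_i(g_1,...,g_i): (j,l) entry g_l^{[j-1]}; 0-based indices *)
definition moore :: "nat \<Rightarrow> nat \<Rightarrow> (nat \<Rightarrow> 'a::field) \<Rightarrow> 'a mat" where
  "moore Q i g = mat i i (\<lambda>(a, b). g (b + 1) ^ (Q ^ a))"

(* entries of M_i(g_1,...,g_i,x) as polynomials; column c (1-based), row j (1-based) *)
definition moore_x_entry :: "nat \<Rightarrow> nat \<Rightarrow> (nat \<Rightarrow> 'a::field) \<Rightarrow> nat \<Rightarrow> nat \<Rightarrow> 'a poly" where
  "moore_x_entry Q i g j c = (if c \<le> i then [: g c ^ (Q ^ (j - 1)) :] else qpow Q (j - 1))"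

(* D_l : M_i(g_1,...,g_i,x) with the l-th column (1-based) removed *)
definition Dmat :: "nat \<Rightarrow> nat \<Rightarrow> (nat \<Rightarrow> 'a::field) \<Rightarrow> nat \<Rightarrow> 'a poly mat" where
  "Dmat Q i g l = mat i i (\<lambda>(a, b). moore_x_entry Q i g (a + 1) (if b + 1 < l then b + 1 else b + 2))"

definition Lambda_poly :: "nat \<Rightarrow> nat \<Rightarrow> (nat \<Rightarrow> 'a::field) \<Rightarrow> (nat \<Rightarrow> 'a) \<Rightarrow> 'a poly" where
  "Lambda_poly Q i g r = (\<Sum>l=1..i. smult ((-1) ^ (i - l) * r l / det (moore Q i g)) (det (Dmat Q i g l)))"

definition pact :: "'a::field poly \<Rightarrow> 'a poly \<times> 'a poly \<Rightarrow> 'a poly \<times> 'a poly" where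
  "pact h f = (pcompose h (fst f), pcompose h (snd f))"

definition padd :: "'a::field poly \<times> 'a poly \<Rightarrow> 'a poly \<times> 'a poly \<Rightarrow> 'a poly \<times> 'a poly" where
  "padd f h = (fst f + fst h, snd f + snd h)"

definition interp_module :: "nat \<Rightarrow> nat \<Rightarrow> (nat \<Rightarrow> 'a::field) \<Rightarrow> (nat \<Rightarrow> 'a) \<Rightarrow> ('a poly \<times> 'a poly) set" where
  "interp_module Q i g r = {padd (pact \<beta> (Pi_poly Q i g, 0)) (pact \<gamma> (- Lambda_poly Q i g r, [:0, 1:])) | \<beta> \<gamma>.
      \<beta> \<in> linpolys Q \<and> \<gamma> \<in> linpolys Q}"

definition is_basis2 :: "nat \<Rightarrow> ('a::field poly \<times> 'a poly) set \<Rightarrow> 'a poly \<times> 'a poly \<Rightarrow> 'a poly \<times> 'a poly \<Rightarrow> bool" where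
  "is_basis2 Q M f1 f2 \<longleftrightarrow>
     M = {padd (pact a1 f1) (pact a2 f2) | a1 a2. a1 \<in> linpolys Q \<and> a2 \<in> linpolys Q} \<and>
     (\<forall>a1\<in>linpolys Q. \<forall>a2\<in>linpolys Q. padd (pact a1 f1) (pact a2 f2) = (0, 0) \<longrightarrow> a1 = 0 \<and> a2 = 0)"

(* 2x2 matrices over L_q as pairs of rows; composition *)
type_synonym 'a mat2 = "('a poly \<times> 'a poly) \<times> ('a poly \<times> 'a poly)"

definition mat2_comp :: "'a::field mat2 \<Rightarrow> 'a mat2 \<Rightarrow> 'a mat2" where
  "mat2_comp A B = (padd (pact (fst (fst A)) (fst B)) (pact (snd (fst A)) (snd B)),
                    padd (pact (fst (snd A)) (fst B)) (pact (snd (snd A)) (snd B)))"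

end

theory Submission
  imports Defs
begin

lemma of_nat_mod_CHAR': "(of_nat (n mod CHAR('a)) :: 'a::ring_1) = of_nat n"
proof -
  have "(of_nat n::'a) = of_nat (n mod CHAR('a) + CHAR('a) * (n div CHAR('a)))" by simp
  also have "\<dots> = of_nat (n mod CHAR('a))" by (simp only: of_nat_add of_nat_mult of_nat_CHAR) simp
  finally show ?thesis by simp
qed

lemma char_dvd_card_fin: "CHAR('a::ring_1) dvd card (UNIV :: 'a set)" if fin: "finite (UNIV :: 'a set)"
proof -
  define c where "c = CHAR('a)"
  have cpos: "c > 0" unfolding c_def using finite_imp_CHAR_pos[OF fin] .
  define Orb where "Orb x = {x + of_nat j | j. True}" for x :: 'a
  have negc: "- (of_nat b :: 'a) = of_nat ((c - 1) * b)" for b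
  proof -
    have "of_nat ((c - 1) * b) + (of_nat b::'a) = of_nat (c * b)"
      using cpos by (metis (no_types, lifting) Suc_diff_1 add.commute mult_Suc of_nat_add)
    also have "\<dots> = 0" by (simp add: c_def)
    finally show ?thesis by (metis add_eq_0_iff2 minus_equation_iff)
  qed
  have Oimg: "Orb x = (\<lambda>j. x + of_nat j) ` {..<c}" for x
  proof
    show "Orb x \<subseteq> (\<lambda>j. x + of_nat j) ` {..<c}"
    proof
      fix y assume "y \<in> Orb x"
      then obtain j where "y = x + of_nat j" unfolding Orb_def by auto
      then have "y = x + of_nat (j mod c)" by (simp add: c_def of_nat_mod_CHAR')
      then show "y \<in> (\<lambda>j. x + of_nat j) ` {..<c}" using cpos by auto
    qed
  qed (auto simp: Orb_def)
  have cardO: "card (Orb x) = c" for x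
  proof -
    have "inj_on (\<lambda>j. x + (of_nat j::'a)) {..<c}"
    proof (rule inj_onI)
      fix a b assume a: "a \<in> {..<c}" and b: "b \<in> {..<c}" and e: "x + (of_nat a::'a) = x + of_nat b"
      then have e': "(of_nat a::'a) = of_nat b" by simp
      show "a = b"
      proof (rule ccontr)
        assume "a \<noteq> b"
        then consider "a < b" | "b < a" by linarith
        then show False
        proof cases
          case 1
          then have "c dvd (b - a)" using e' of_nat_eq_iff_char_dvd[OF 1] c_def by auto
          moreover have "0 < b - a" "b - a < c" using 1 b by auto
          ultimately show False using nat_dvd_not_less by blast
        next
          case 2
          then have "c dvd (a - b)" using e' of_nat_eq_iff_char_dvd[OF 2] c_def by auto
          moreover have "0 < a - b" "a - b < c" using 2 a by auto
          ultimately show False using nat_dvd_not_less by blast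
        qed
      qed
    qed
    then show ?thesis by (simp add: Oimg card_image)
  qed
  have disj: "Orb x = Orb y" if "z \<in> Orb x" "z \<in> Orb y" for x y z
  proof -
    have sub: "Orb u \<subseteq> Orb v" if h1: "z \<in> Orb u" and h2: "z \<in> Orb v" for u v
    proof
      fix w assume "w \<in> Orb u"
      then obtain a where w: "w = u + of_nat a" unfolding Orb_def by auto
      obtain b where b: "z = u + of_nat b" using h1 unfolding Orb_def by auto
      obtain b' where b': "z = v + of_nat b'" using h2 unfolding Orb_def by auto
      have "w = v + (of_nat b' + - of_nat b + of_nat a)" using w b b' by (simp add: algebra_simps)
      also have "\<dots> = v + of_nat (b' + (c - 1) * b + a)" by (simp add: negc)
      finally show "w \<in> Orb v" unfolding Orb_def by blast
    qed
    show ?thesis using sub[OF that] sub[OF that(2,1)] by blast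
  qed
  have "c * card (range Orb) = card (\<Union> (range Orb))"
  proof (rule card_partition)
    show "finite (range Orb)" using fin by simp
    show "finite (\<Union> (range Orb))" by (rule finite_subset[OF subset_UNIV fin])
    show "\<And>c1. c1 \<in> range Orb \<Longrightarrow> card c1 = c" using cardO by auto
    show "\<And>c1 c2. c1 \<in> range Orb \<Longrightarrow> c2 \<in> range Orb \<Longrightarrow> c1 \<noteq> c2 \<Longrightarrow> c1 \<inter> c2 = {}"
      using disj by blast
  qed
  also have "\<Union> (range Orb) = UNIV"
  proof -
    have "x \<in> Orb x" for x unfolding Orb_def by (rule CollectI, rule exI[of _ 0]) simp
    then show ?thesis by blast
  qed
  finally show ?thesis unfolding c_def by (metis dvd_triv_left)
qed


lemma smult_sum_r: "smult c (sum f A) = (\<Sum>x\<in>A. smult c (f x))"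
  by (induction A rule: infinite_finite_induct) (auto simp: smult_add_right)

definition Lp :: "nat \<Rightarrow> 'a::field \<Rightarrow> 'a poly" where
  "Lp Q a = monom 1 Q - smult (a ^ (Q - 1)) [:0, 1:]"

primrec Psi :: "nat \<Rightarrow> (nat \<Rightarrow> 'a::field) \<Rightarrow> nat \<Rightarrow> 'a poly" where
  "Psi Q g 0 = [:0, 1:]"
| "Psi Q g (Suc i) = pcompose (Lp Q (poly (Psi Q g i) (g (Suc i)))) (Psi Q g i)"

lemma comm_ring_hom_poly: "comm_ring_hom (\<lambda>p. poly p (x::'a::comm_ring_1))"
  by unfold_locales auto

definition colD :: "nat \<Rightarrow> nat \<Rightarrow> nat" where
  "colD l b = (if b + 1 < l then b + 1 else b + 2)"

definition Emat :: "nat \<Rightarrow> nat \<Rightarrow> (nat \<Rightarrow> 'a::field) \<Rightarrow> nat \<Rightarrow> 'a \<Rightarrow> 'a mat" where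
  "Emat Q i g l x = mat i i (\<lambda>(a, b). (if colD l b \<le> i then g (colD l b) else x) ^ (Q ^ a))"

locale lq =
  fixes Q p e m :: nat and TY :: "'a::{field,finite} itself"
  assumes p_prime: "prime p" and e_pos: "e > 0" and Qdef: "Q = p ^ e" and m_pos: "m \<ge> 1"
    and card_UNIV: "card (UNIV :: 'a set) = Q ^ m"
begin

lemma CHAR_eq: "CHAR('a) = p"
proof -
  have fin: "finite (UNIV :: 'a set)" by simp
  have cp: "prime CHAR('a)" using prime_CHAR_semidom finite_imp_CHAR_pos[OF fin] by blast
  have "CHAR('a) dvd p ^ (e * m)" using char_dvd_card_fin[OF fin] card_UNIV Qdef by (simp add: power_mult)
  then have "CHAR('a) dvd p" using cp prime_dvd_power by blast
  then show ?thesis using cp p_prime primes_dvd_imp_eq by blast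
qed

lemma Q_ge2: "Q \<ge> 2"
proof -
  have "p \<ge> 2" using p_prime prime_ge_2_nat by blast
  then have "p ^ e \<ge> p ^ 1" using e_pos by (intro power_increasing) auto
  then show ?thesis using \<open>p \<ge> 2\<close> Qdef by simp
qed

lemma Q_pos: "Q > 0" using Q_ge2 by simp

lemma frob_gen:
  assumes "CHAR('b::comm_semiring_1) = p"
  shows "((x::'b) + y) ^ (Q ^ j) = x ^ (Q ^ j) + y ^ (Q ^ j)"
proof -
  have "Q ^ j = CHAR('b) ^ (e * j)" using assms Qdef by (simp add: power_mult)
  then show ?thesis using freshmans_dream'[where 'a='b and m="Q^j" and n="e*j" and x=x and y=y] assms p_prime by simp
qed

lemma frob_sum_gen:
  assumes "CHAR('b::comm_semiring_1) = p"
  shows "(sum (f :: 'c \<Rightarrow> 'b) A) ^ (Q ^ j) = (\<Sum>x\<in>A. f x ^ (Q ^ j))"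
proof (induction A rule: infinite_finite_induct)
  case (infinite A) then show ?case using Q_pos by (simp add: power_0_left)
next
  case empty then show ?case using Q_pos by (simp add: power_0_left)
next
  case (insert x F) then show ?case using frob_gen[OF assms] by simp
qed

lemma frob: "((x::'a) + y) ^ (Q ^ j) = x ^ (Q ^ j) + y ^ (Q ^ j)"
  using frob_gen CHAR_eq by blast

lemma frob_poly: "((x::'a poly) + y) ^ (Q ^ j) = x ^ (Q ^ j) + y ^ (Q ^ j)"
  using frob_gen CHAR_eq semiring_char_poly by blast

lemma frob1: "((x::'a) + y) ^ Q = x ^ Q + y ^ Q"
  using frob[of x y 1] by simp

lemma frob_diff_gen:
  assumes "CHAR('b::comm_ring_1) = p"
  shows "((x::'b) - y) ^ (Q ^ j) = x ^ (Q ^ j) - y ^ (Q ^ j)"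
proof -
  have "x ^ (Q ^ j) = ((x - y) + y) ^ (Q ^ j)" by simp
  also have "\<dots> = (x - y) ^ (Q ^ j) + y ^ (Q ^ j)" using frob_gen[OF assms] by blast
  finally show ?thesis by simp
qed

lemma frob_diff_poly: "((x::'a poly) - y) ^ (Q ^ j) = x ^ (Q ^ j) - y ^ (Q ^ j)"
  using frob_diff_gen CHAR_eq semiring_char_poly by blast


lemma lin_iff: "f \<in> linpolys Q \<longleftrightarrow> (\<forall>k. coeff f k \<noteq> 0 \<longrightarrow> (\<exists>j. k = Q ^ j))"
  by (simp add: linpolys_def)

lemma lin_zero[simp]: "0 \<in> linpolys Q" by (simp add: lin_iff)

lemma lin_add[intro]: "(f::'a poly) \<in> linpolys Q \<Longrightarrow> h \<in> linpolys Q \<Longrightarrow> f + h \<in> linpolys Q"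
  by (auto simp: lin_iff) (metis add.right_neutral)

lemma lin_uminus[intro]: "(f::'a poly) \<in> linpolys Q \<Longrightarrow> - f \<in> linpolys Q"
  by (auto simp: lin_iff)

lemma lin_diff[intro]: "(f::'a poly) \<in> linpolys Q \<Longrightarrow> h \<in> linpolys Q \<Longrightarrow> f - h \<in> linpolys Q"
  using lin_add[of f "-h"] lin_uminus[of h] by simp

lemma lin_smult[intro]: "(f::'a poly) \<in> linpolys Q \<Longrightarrow> smult c f \<in> linpolys Q"
  by (auto simp: lin_iff)

lemma lin_monom[intro]: "monom (c::'a) (Q ^ j) \<in> linpolys Q"
  by (auto simp: lin_iff coeff_monom split: if_splits)

lemma lin_X[intro]: "[:0, c::'a:] \<in> linpolys Q"
proof -
  have "[:0, c:] = monom c (Q ^ 0)" by (simp add: monom_altdef)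
  then show ?thesis using lin_monom by metis
qed

lemma lin_sum[intro]: "(\<And>x. x \<in> A \<Longrightarrow> (f x :: 'a poly) \<in> linpolys Q) \<Longrightarrow> sum f A \<in> linpolys Q"
  by (induction A rule: infinite_finite_induct) auto

lemma lin_coeff0: "(f::'a poly) \<in> linpolys Q \<Longrightarrow> coeff f 0 = 0"
  using Q_pos by (auto simp: lin_iff)

lemma pcompose_monom': "pcompose (monom c n) q = smult c (q ^ n)"
proof -
  have pw0: "pcompose (r ^ n) q = (pcompose r q) ^ n" for n :: nat and r :: "'b::comm_semiring_1 poly"
    by (induction n) (simp_all add: pcompose_mult pcompose_1)
  have pw: "pcompose ([:0,1:] ^ n) q = q ^ n" for n :: nat
    by (simp add: pw0 pcompose_pCons)
  show ?thesis by (simp add: monom_altdef pcompose_smult pw)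
qed

lemma pcompose_expand: "pcompose f q = (\<Sum>i\<le>degree f. smult (coeff f i) (q ^ i))"
proof -
  have "pcompose f q = pcompose (\<Sum>i\<le>degree f. monom (coeff f i) i) q"
    by (simp add: poly_as_sum_of_monoms)
  also have "\<dots> = (\<Sum>i\<le>degree f. smult (coeff f i) (q ^ i))"
    by (simp add: pcompose_sum pcompose_monom')
  finally show ?thesis .
qed

lemma lin_pcomp_add:
  assumes "(f::'a poly) \<in> linpolys Q"
  shows "pcompose f (a + b) = pcompose f a + pcompose f b"
proof -
  have "smult (coeff f i) ((a + b) ^ i) = smult (coeff f i) (a ^ i) + smult (coeff f i) (b ^ i)" for i
  proof (cases "coeff f i = 0")
    case False
    then obtain j where "i = Q ^ j" using assms by (auto simp: lin_iff)
    then show ?thesis using frob_poly by (simp add: smult_add_right)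
  qed simp
  then show ?thesis by (simp add: pcompose_expand sum.distrib)
qed

lemma lin_pcomp_smult:
  assumes "(f::'a poly) \<in> linpolys Q" and c: "c ^ Q = c"
  shows "pcompose f (smult c a) = smult c (pcompose f a)"
proof -
  have cj: "c ^ (Q ^ j) = c" for j
    by (induction j) (simp_all add: power_mult c)
  have "smult (coeff f i) ((smult c a) ^ i) = smult c (smult (coeff f i) (a ^ i))" for i
  proof (cases "coeff f i = 0")
    case False
    then obtain j where "i = Q ^ j" using assms by (auto simp: lin_iff)
    then show ?thesis using cj by (simp add: smult_power mult.commute)
  qed simp
  then show ?thesis by (simp add: pcompose_expand smult_sum_r)
qed

lemma lin_pcomp_0: "(f::'a poly) \<in> linpolys Q \<Longrightarrow> pcompose f 0 = 0"
  by (simp add: pcompose_0' lin_coeff0)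

lemma lin_pcomp_uminus:
  assumes "(f::'a poly) \<in> linpolys Q" shows "pcompose f (- a) = - pcompose f a"
proof -
  have "pcompose f (- a) + pcompose f a = 0"
    using lin_pcomp_add[OF assms, of "-a" a] lin_pcomp_0[OF assms] by simp
  then show ?thesis by (simp add: eq_neg_iff_add_eq_0)
qed

lemma lin_pcomp_diff:
  assumes "(f::'a poly) \<in> linpolys Q" shows "pcompose f (a - b) = pcompose f a - pcompose f b"
  using lin_pcomp_add[OF assms, of a "-b"] lin_pcomp_uminus[OF assms, of b] by simp

lemma lin_poly_add: "(f::'a poly) \<in> linpolys Q \<Longrightarrow> poly f (x + y) = poly f x + poly f y"
  using lin_pcomp_add[of f "[:x:]" "[:y:]"] by (simp add: pcompose_pCons_0)

lemma lin_poly_0: "(f::'a poly) \<in> linpolys Q \<Longrightarrow> poly f 0 = 0"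
  using lin_pcomp_0[of f] by (metis pcompose_pCons_0 pCons_eq_0_iff)

lemma lin_poly_uminus: "(f::'a poly) \<in> linpolys Q \<Longrightarrow> poly f (- x) = - poly f x"
  using lin_pcomp_uminus[of f "[:x:]"] by (simp add: pcompose_pCons_0)

lemma lin_poly_diff: "(f::'a poly) \<in> linpolys Q \<Longrightarrow> poly f (x - y) = poly f x - poly f y"
  using lin_pcomp_diff[of f "[:x:]" "[:y:]"] by (simp add: pcompose_pCons_0)

lemma lin_poly_smult: "(f::'a poly) \<in> linpolys Q \<Longrightarrow> c ^ Q = c \<Longrightarrow> poly f (c * x) = c * poly f x"
  using lin_pcomp_smult[of f c "[:x:]"] by (simp add: pcompose_pCons_0)

lemma lin_pow:
  assumes "(q::'a poly) \<in> linpolys Q" shows "q ^ (Q ^ j) \<in> linpolys Q"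
proof -
  have "q ^ (Q ^ j) = (\<Sum>i\<le>degree q. monom (coeff q i) i) ^ (Q ^ j)"
    by (simp add: poly_as_sum_of_monoms)
  also have "\<dots> = (\<Sum>i\<le>degree q. monom (coeff q i) i ^ (Q ^ j))"
    using frob_sum_gen[where 'b="'a poly"] CHAR_eq semiring_char_poly by blast
  also have "\<dots> \<in> linpolys Q"
  proof (rule lin_sum)
    fix i
    show "monom (coeff q i) i ^ (Q ^ j) \<in> linpolys Q"
    proof (cases "coeff q i = 0")
      case True then show ?thesis using Q_pos by (simp add: power_0_left)
    next
      case False
      then obtain t where "i = Q ^ t" using assms by (auto simp: lin_iff)
      then show ?thesis using lin_monom by (simp add: monom_power flip: power_add)
    qed
  qed
  finally show ?thesis .
qed

lemma lin_pcomp[intro]: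
  assumes "(f::'a poly) \<in> linpolys Q" "q \<in> linpolys Q" shows "pcompose f q \<in> linpolys Q"
  unfolding pcompose_expand
proof (rule lin_sum)
  fix i show "smult (coeff f i) (q ^ i) \<in> linpolys Q"
  proof (cases "coeff f i = 0")
    case False
    then obtain j where "i = Q ^ j" using assms by (auto simp: lin_iff)
    then show ?thesis using lin_pow[OF assms(2)] by auto
  qed simp
qed


lemma Fq_iff: "x \<in> Fq Q \<longleftrightarrow> x ^ Q = (x::'a)" by (simp add: Fq_def)

lemma Fq_add: "x \<in> Fq Q \<Longrightarrow> y \<in> Fq Q \<Longrightarrow> x + (y::'a) \<in> Fq Q"
  by (simp add: Fq_iff frob1)

lemma Fq_mult: "x \<in> Fq Q \<Longrightarrow> y \<in> Fq Q \<Longrightarrow> x * (y::'a) \<in> Fq Q"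
  by (simp add: Fq_iff power_mult_distrib)

lemma Fq_0: "(0::'a) \<in> Fq Q" using Q_pos by (simp add: Fq_iff power_0_left)
lemma Fq_1: "(1::'a) \<in> Fq Q" by (simp add: Fq_iff)

lemma Fq_diff: "x \<in> Fq Q \<Longrightarrow> y \<in> Fq Q \<Longrightarrow> x - (y::'a) \<in> Fq Q"
  using frob_diff_gen[where 'b='a, of x y 1] CHAR_eq by (simp add: Fq_iff)

lemma Fq_uminus: "x \<in> Fq Q \<Longrightarrow> - (x::'a) \<in> Fq Q"
  using Fq_diff[OF Fq_0] by simp

lemma power_card_minus1: "(x::'a) \<noteq> 0 \<Longrightarrow> x ^ (card (UNIV::'a set) - 1) = 1"
proof -
  assume x: "x \<noteq> 0"
  let ?N = "card (UNIV::'a set)"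
  have "(\<Prod>y\<in>UNIV-{0}. x * y) = x ^ card (UNIV - {0::'a}) * \<Prod>(UNIV-{0::'a})"
    by (simp add: prod.distrib)
  moreover have "card (UNIV - {0::'a}) = ?N - 1" by (simp add: card_Diff_singleton)
  moreover have "(\<Prod>y\<in>UNIV-{0}. x * y) = (\<Prod>y\<in>UNIV-{0}. y)"
    by (rule prod.reindex_bij_witness[of _ "\<lambda>y. y / x" "\<lambda>y. x * y"]) (use x in auto)
  moreover have "\<Prod>(UNIV-{0::'a}) \<noteq> 0" by (simp add: prod_zero_iff)
  ultimately show ?thesis by (metis mult_cancel_right2)
qed

lemma power_card: "(x::'a) ^ (Q ^ m) = x"
proof (cases "x = 0")
  case True then show ?thesis using Q_pos by (simp add: power_0_left)
next
  case False
  have N: "card (UNIV::'a set) > 0" by (simp add: card_gt_0_iff)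
  have "x ^ (Q ^ m) = x * x ^ (card (UNIV::'a set) - 1)"
    using N card_UNIV by (metis Suc_diff_1 power_Suc)
  then show ?thesis using power_card_minus1[OF False] by simp
qed

lemma roots_card_le:
  assumes "(f::'a poly) \<noteq> 0" and "\<forall>x\<in>S. poly f x = 0"
  shows "card S \<le> degree f"
proof -
  have "card S \<le> card {x. poly f x = 0}"
    by (rule card_mono) (use poly_roots_finite[OF assms(1)] assms(2) in auto)
  also have "\<dots> \<le> degree f" by (rule card_poly_roots_bound[OF assms(1)])
  finally show ?thesis .
qed

lemma poly_eq_on:
  assumes "degree ((f::'a poly) - h) < card S" and "\<forall>x\<in>S. poly f x = poly h x"
  shows "f = h"
proof (rule ccontr)
  assume "f \<noteq> h"
  then have "f - h \<noteq> 0" by simp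
  from roots_card_le[OF this, of S] assms show False by auto
qed

lemma card_Fq: "card (Fq Q :: 'a set) = Q"
proof (rule antisym)
  let ?L = "monom 1 Q - [:0, 1::'a:]"
  have cQ: "coeff ?L Q = 1" using Q_ge2 by (simp add: coeff_monom coeff_pCons split: nat.splits)
  then have L0: "?L \<noteq> 0" by (metis coeff_0 zero_neq_one)
  have "degree ?L \<le> Q"
    by (rule degree_le) (use Q_pos in \<open>auto simp: coeff_monom coeff_pCons split: nat.splits\<close>)
  moreover have "\<forall>x\<in>Fq Q. poly ?L x = 0" by (simp add: Fq_iff poly_monom)
  ultimately show "card (Fq Q :: 'a set) \<le> Q" using roots_card_le[OF L0] by fastforce
next
  obtain m' where m': "m = Suc m'" using m_pos by (cases m) auto
  define Tr where "Tr = (\<Sum>j<m. monom (1::'a) (Q ^ j))"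
  have polyTr: "poly Tr x = (\<Sum>j<m. x ^ (Q ^ j))" for x by (simp add: Tr_def poly_sum poly_monom)
  have injQ: "Q ^ a = Q ^ b \<Longrightarrow> a = b" for a b using Q_ge2 by (simp add: power_inject_exp)
  have inFq: "poly Tr x \<in> Fq Q" for x
  proof -
    have "(poly Tr x) ^ Q = (\<Sum>j<m. (x ^ (Q ^ j)) ^ Q)"
      using frob_sum_gen[where 'b='a, of "\<lambda>j. x ^ (Q ^ j)" "{..<m}" 1] CHAR_eq polyTr by simp
    also have "\<dots> = (\<Sum>j<m. x ^ (Q ^ Suc j))" by (intro sum.cong refl) (metis power_mult power_Suc2)
    also have "\<dots> = (\<Sum>j<m'. x ^ (Q ^ Suc j)) + x ^ (Q ^ m)" by (simp add: m')
    also have "x ^ (Q ^ m) = x ^ (Q ^ 0)" using power_card by simp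
    also have "(\<Sum>j<m'. x ^ (Q ^ Suc j)) + x ^ (Q ^ 0) = (\<Sum>j<m. x ^ (Q ^ j))"
      unfolding m' by (subst sum.lessThan_Suc_shift) simp
    finally show ?thesis by (simp add: Fq_iff polyTr)
  qed
  have degTr: "degree (Tr - [:y:]) = Q ^ m'" for y
  proof (rule antisym)
    show "degree (Tr - [:y:]) \<le> Q ^ m'"
    proof (rule degree_le, intro allI impI)
      fix n assume n: "Q ^ m' < n"
      have "coeff Tr n = 0"
      proof -
        have "Q ^ j \<noteq> n" if "j < m" for j
        proof -
          have "Q ^ j \<le> Q ^ m'" using that m' Q_ge2 by (intro power_increasing) auto
          then show ?thesis using n by auto
        qed
        then show ?thesis by (simp add: Tr_def coeff_sum coeff_monom)
      qed
      moreover have "n > 0" using n by simp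
      ultimately show "coeff (Tr - [:y:]) n = 0" by (simp add: coeff_pCons split: nat.splits)
    qed
  next
    have "coeff Tr (Q ^ m') = (\<Sum>j<m. coeff (monom (1::'a) (Q ^ j)) (Q ^ m'))"
      unfolding Tr_def by (rule coeff_sum)
    also have "\<dots> = (\<Sum>j<m. if j = m' then 1 else 0)"
    proof (intro sum.cong refl)
      fix j
      show "coeff (monom (1::'a) (Q ^ j)) (Q ^ m') = (if j = m' then 1 else 0)"
        unfolding coeff_monom using injQ[of j m'] by auto
    qed
    also have "\<dots> = 1" using m' by simp
    finally have "coeff Tr (Q ^ m') = 1" .
    moreover have "Q ^ m' > 0" using Q_pos by simp
    ultimately have "coeff (Tr - [:y:]) (Q ^ m') \<noteq> 0" using Q_pos by (simp add: coeff_pCons split: nat.splits)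
    then show "Q ^ m' \<le> degree (Tr - [:y:])" by (rule le_degree)
  qed
  have fib: "card {x. poly Tr x = y} \<le> Q ^ m'" for y
  proof -
    have ne: "Tr - [:y:] \<noteq> 0"
    proof
      assume "Tr - [:y:] = 0"
      then have "degree (Tr - [:y:]) = 0" by simp
      then show False using degTr[of y] Q_pos by simp
    qed
    have "card {x. poly Tr x = y} \<le> degree (Tr - [:y:])"
      by (rule roots_card_le[OF ne]) simp
    then show ?thesis using degTr by simp
  qed
  let ?I = "range (poly Tr)"
  have "Q ^ m = card (\<Union>y\<in>?I. {x. poly Tr x = y})"
    using card_UNIV by (metis (mono_tags, lifting) UNIV_eq_I UN_iff mem_Collect_eq rangeI)
  also have "\<dots> \<le> (\<Sum>y\<in>?I. card {x. poly Tr x = y})" by (rule card_UN_le) simp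
  also have "\<dots> \<le> (\<Sum>y\<in>?I. Q ^ m')" by (rule sum_mono) (rule fib)
  also have "\<dots> = card ?I * Q ^ m'" by simp
  also have "card ?I \<le> card (Fq Q :: 'a set)" by (rule card_mono) (use inFq in auto)
  finally have "Q * Q ^ m' \<le> card (Fq Q :: 'a set) * Q ^ m'"
    using m' by (metis mult_le_mono1 order_trans power_Suc)
  then show "Q \<le> card (Fq Q :: 'a set)" using Q_pos by simp
qed


lemma X_monom: "[:0, c:] = monom c 1" by (simp only: One_nat_def monom_Suc monom_0)

lemma lin_Lp: "Lp Q (a::'a) \<in> linpolys Q"
  unfolding Lp_def using lin_monom[of 1 1] lin_X by (intro lin_diff lin_smult) auto

lemma Lp_root: "poly (Lp Q (a::'a)) a = 0"
proof -
  have "a * a ^ (Q - 1) = a ^ Q" using Q_pos by (metis Suc_diff_1 power_Suc)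
  then show ?thesis by (simp add: Lp_def poly_monom)
qed

lemma coeff_Lp: "coeff (Lp Q (a::'a)) n = (if n = Q then 1 else 0) - (if n = 1 then a ^ (Q - 1) else 0)"
  by (simp add: Lp_def X_monom coeff_monom)

lemma degree_Lp: "degree (Lp Q (a::'a)) = Q" and lead_Lp: "lead_coeff (Lp Q (a::'a)) = 1"
proof -
  have "coeff (Lp Q a) Q = 1" using Q_ge2 by (simp add: coeff_Lp)
  moreover have "degree (Lp Q a) \<le> Q" by (rule degree_le) (use Q_pos in \<open>simp add: coeff_Lp\<close>)
  ultimately show "degree (Lp Q a) = Q" by (metis le_antisym le_degree zero_neq_one)
  then show "lead_coeff (Lp Q (a::'a)) = 1" using \<open>coeff (Lp Q a) Q = 1\<close> by simp
qed

lemma Lp_pow: "(Lp Q (a::'a)) ^ (Q ^ s) = monom 1 (Q ^ Suc s) - monom ((a ^ (Q - 1)) ^ (Q ^ s)) (Q ^ s)"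
proof -
  have "(Lp Q a) ^ (Q ^ s) = (monom 1 Q) ^ (Q ^ s) - (monom (a ^ (Q - 1)) 1) ^ (Q ^ s)"
    unfolding Lp_def X_monom smult_monom by (simp add: frob_diff_poly)
  then show ?thesis by (simp add: monom_power mult.commute)
qed

lemma division_Lp:
  assumes "(\<beta>::'a poly) \<in> linpolys Q" and "poly \<beta> a = 0" and "a \<noteq> 0"
  shows "\<exists>\<delta>\<in>linpolys Q. \<beta> = pcompose \<delta> (Lp Q a)"
  using assms(1,2)
proof (induction "degree \<beta>" arbitrary: \<beta> rule: less_induct)
  case less
  show ?case
  proof (cases "\<beta> = 0")
    case True then show ?thesis by (intro bexI[of _ 0]) auto
  next
    case False
    define d where "d = degree \<beta>"
    define c where "c = coeff \<beta> d"
    have c0: "c \<noteq> 0" using False by (simp add: c_def d_def)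
    then obtain t where t: "d = Q ^ t" using less.prems(1) by (auto simp: lin_iff c_def)
    show ?thesis
    proof (cases t)
      case 0
      then have d1: "d = 1" using t by simp
      have "\<beta> = [:0, c:]"
      proof (rule poly_eqI)
        fix n show "coeff \<beta> n = coeff [:0, c:] n"
        proof (cases n)
          case 0 then show ?thesis using lin_coeff0[OF less.prems(1)] by simp
        next
          case (Suc k)
          show ?thesis
          proof (cases k)
            case 0 then show ?thesis using Suc c_def d1 by simp
          next
            case (Suc k')
            then have "coeff \<beta> n = 0" using \<open>n = Suc k\<close> d1 d_def by (simp add: coeff_eq_0)
            then show ?thesis using \<open>n = Suc k\<close> Suc by simp
          qed
        qed
      qed
      then have "poly \<beta> a = c * a" by simp
      then show ?thesis using less.prems(2) c0 assms(3) by simp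
    next
      case (Suc s)
      define \<beta>' where "\<beta>' = \<beta> - smult c ((Lp Q a) ^ (Q ^ s))"
      have lin': "\<beta>' \<in> linpolys Q" unfolding \<beta>'_def
        using less.prems(1) lin_pow[OF lin_Lp] by blast
      have root': "poly \<beta>' a = 0"
        unfolding \<beta>'_def using less.prems(2) Lp_root Q_pos by (simp add: power_0_left)
      have coeffpow: "coeff ((Lp Q a) ^ (Q ^ s)) n = (if n = d then 1 else 0)" if "n \<ge> d" for n
      proof -
        have lt: "Q ^ s < d" using Q_ge2 t Suc by simp
        have "n \<noteq> Q ^ s" using lt that by simp
        then show ?thesis using that t Suc by (simp add: Lp_pow coeff_monom)
      qed
      have dpos: "d > 0" using t Q_pos by simp
      have deg': "degree \<beta>' < degree \<beta>"
      proof -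
        have "degree \<beta>' \<le> d - 1"
        proof (rule degree_le, intro allI impI)
          fix n assume "d - 1 < n"
          then have n: "n \<ge> d" by simp
          show "coeff \<beta>' n = 0"
          proof (cases "n = d")
            case True then show ?thesis using coeffpow[OF n] by (simp add: \<beta>'_def c_def)
          next
            case False
            then have "coeff \<beta> n = 0" using n d_def by (simp add: coeff_eq_0)
            then show ?thesis using coeffpow[OF n] False by (simp add: \<beta>'_def)
          qed
        qed
        then show ?thesis using dpos d_def by simp
      qed
      obtain \<delta>' where \<delta>': "\<delta>' \<in> linpolys Q" "\<beta>' = pcompose \<delta>' (Lp Q a)"
        using less.hyps[OF deg' lin' root'] by blast
      have "\<beta> = \<beta>' + smult c ((Lp Q a) ^ (Q ^ s))" by (simp add: \<beta>'_def)
      also have "\<dots> = pcompose (\<delta>' + monom c (Q ^ s)) (Lp Q a)"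
        using \<delta>'(2) by (simp add: pcompose_add pcompose_monom')
      finally show ?thesis using \<delta>'(1) lin_monom by blast
    qed
  qed
qed


lemma lin_Psi: "Psi Q (g::nat \<Rightarrow> 'a) i \<in> linpolys Q"
  by (induction i) (auto intro: lin_pcomp lin_Lp)

lemma deg_Psi: "degree (Psi Q (g::nat \<Rightarrow> 'a) i) = Q ^ i \<and> lead_coeff (Psi Q g i) = 1"
proof (induction i)
  case 0 then show ?case by simp
next
  case (Suc i)
  have pos: "degree (Psi Q g i) > 0" using Suc Q_pos by simp
  let ?a = "poly (Psi Q g i) (g (Suc i))"
  have "lead_coeff (Psi Q g (Suc i)) = lead_coeff (Lp Q ?a) * lead_coeff (Psi Q g i) ^ degree (Lp Q ?a)"
    by (simp only: Psi.simps) (rule lead_coeff_comp[OF pos])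
  also have "\<dots> = 1" using Suc by (metis lead_Lp power_one mult_1)
  finally show ?case using Suc
    by (simp add: degree_pcompose degree_Lp)
qed

lemma Psi_nonzero: "Psi Q (g::nat \<Rightarrow> 'a) i \<noteq> 0"
  using deg_Psi[of g i] by auto

lemma Psi_zero: "1 \<le> l \<Longrightarrow> l \<le> i \<Longrightarrow> poly (Psi Q (g::nat \<Rightarrow> 'a) i) (g l) = 0"
proof (induction i)
  case 0 then show ?case by simp
next
  case (Suc i)
  show ?case
  proof (cases "l = Suc i")
    case True then show ?thesis by (simp add: poly_pcompose Lp_root)
  next
    case False
    then have "poly (Psi Q g i) (g l) = 0" using Suc by simp
    then show ?thesis by (simp add: poly_pcompose lin_poly_0[OF lin_Lp])
  qed
qed

lemma lin_poly_sum: "(f::'a poly) \<in> linpolys Q \<Longrightarrow> poly f (sum h A) = (\<Sum>x\<in>A. poly f (h x))"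
  by (induction A rule: infinite_finite_induct) (auto simp: lin_poly_0 lin_poly_add)

lemma lin_vanish_span:
  assumes "(f::'a poly) \<in> linpolys Q" and "\<forall>l\<in>{1..i}. poly f (g l) = 0" and "u \<in> Fq_span Q i g"
  shows "poly f u = 0"
proof -
  obtain c where u: "u = (\<Sum>l=1..i. c l * g l)" and c: "\<forall>l\<in>{1..i}. c l \<in> Fq Q"
    using assms(3) unfolding Fq_span_def by blast
  have "poly f u = (\<Sum>l=1..i. poly f (c l * g l))" using u lin_poly_sum[OF assms(1)] by simp
  also have "\<dots> = (\<Sum>l=1..i. c l * poly f (g l))"
    by (intro sum.cong refl) (use c assms(1) in \<open>auto simp: lin_poly_smult Fq_iff\<close>)
  also have "\<dots> = 0" using assms(2) by simp
  finally show ?thesis .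
qed

lemma indep_mono:
  assumes "Fq_lin_indep Q n (g::nat \<Rightarrow> 'a)" and "i \<le> n"
    and "\<forall>l\<in>{1..i}. c l \<in> Fq Q" and "(\<Sum>l=1..i. c l * g l) = 0"
  shows "\<forall>l\<in>{1..i}. c l = 0"
proof -
  define d where "d l = (if l \<le> i then c l else 0)" for l
  have "(\<Sum>l=1..n. d l * g l) = (\<Sum>l=1..i. d l * g l)"
    by (rule sum.mono_neutral_right) (use assms(2) in \<open>auto simp: d_def\<close>)
  also have "\<dots> = (\<Sum>l=1..i. c l * g l)" by (intro sum.cong refl) (auto simp: d_def)
  finally have "(\<Sum>l=1..n. d l * g l) = 0" using assms(4) by simp
  moreover have "\<forall>l\<in>{1..n}. d l \<in> Fq Q" using assms(3) Fq_0 by (auto simp: d_def)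
  ultimately have z: "\<forall>l\<in>{1..n}. d l = 0" using assms(1) unfolding Fq_lin_indep_def by blast
  show ?thesis
  proof
    fix l assume l: "l \<in> {1..i}"
    then have "l \<in> {1..n}" using assms(2) by auto
    then have "d l = 0" using z by blast
    then show "c l = 0" using l by (simp add: d_def)
  qed
qed

lemma card_span:
  assumes "Fq_lin_indep Q n (g::nat \<Rightarrow> 'a)" and "i \<le> n"
  shows "card (Fq_span Q i g) = Q ^ i"
proof -
  let ?F = "\<lambda>c. (\<Sum>l=1..i. c l * g l)"
  let ?P = "PiE {1..i} (\<lambda>_. Fq Q :: 'a set)"
  have img: "Fq_span Q i g = ?F ` ?P"
  proof
    show "Fq_span Q i g \<subseteq> ?F ` ?P"
    proof
      fix u assume "u \<in> Fq_span Q i g"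
      then obtain c where u: "u = ?F c" and c: "\<forall>l\<in>{1..i}. c l \<in> Fq Q"
        unfolding Fq_span_def by blast
      have r1: "restrict c {1..i} \<in> ?P" using c by auto
      have r2: "?F (restrict c {1..i}) = u" unfolding u by (intro sum.cong refl) auto
      show "u \<in> ?F ` ?P" by (rule image_eqI[where f="?F", OF r2[symmetric] r1])
    qed
  next
    show "?F ` ?P \<subseteq> Fq_span Q i g" unfolding Fq_span_def by (auto simp: PiE_def Pi_def)
  qed
  have inj: "inj_on ?F ?P"
  proof (rule inj_onI)
    fix c c' assume c: "c \<in> ?P" and c': "c' \<in> ?P" and eq: "?F c = ?F c'"
    define d where "d l = c l - c' l" for l
    have "(\<Sum>l=1..i. d l * g l) = ?F c - ?F c'"
      by (simp add: d_def algebra_simps sum_subtractf)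
    then have "(\<Sum>l=1..i. d l * g l) = 0" using eq by simp
    moreover have "\<forall>l\<in>{1..i}. d l \<in> Fq Q" using c c' by (auto simp: d_def intro!: Fq_diff)
    ultimately have "\<forall>l\<in>{1..i}. d l = 0" using indep_mono[OF assms] by blast
    then show "c = c'" using c c' by (intro PiE_ext[OF c c']) (auto simp: d_def)
  qed
  have "card (Fq_span Q i g) = card ?P" unfolding img by (rule card_image[OF inj])
  also have "\<dots> = Q ^ i" by (simp add: card_PiE card_Fq)
  finally show ?thesis .
qed

lemma Psi_vanish_span: "u \<in> Fq_span Q i g \<Longrightarrow> poly (Psi Q (g::nat \<Rightarrow> 'a) i) u = 0"
proof -
  assume u: "u \<in> Fq_span Q i g"
  show ?thesis by (rule lin_vanish_span[OF lin_Psi _ u]) (auto intro: Psi_zero)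
qed

lemma not_in_span:
  assumes "Fq_lin_indep Q n (g::nat \<Rightarrow> 'a)" and "i < n"
  shows "g (Suc i) \<notin> Fq_span Q i g"
proof
  assume "g (Suc i) \<in> Fq_span Q i g"
  then obtain c where u: "g (Suc i) = (\<Sum>l=1..i. c l * g l)" and c: "\<forall>l\<in>{1..i}. c l \<in> Fq Q"
    unfolding Fq_span_def by blast
  define d where "d l = (if l = Suc i then -1 else c l)" for l
  have "(\<Sum>l=1..Suc i. d l * g l) = (\<Sum>l=1..i. d l * g l) + d (Suc i) * g (Suc i)" by simp
  also have "(\<Sum>l=1..i. d l * g l) = (\<Sum>l=1..i. c l * g l)" by (intro sum.cong refl) (auto simp: d_def)
  finally have "(\<Sum>l=1..Suc i. d l * g l) = 0" using u by (simp add: d_def)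
  moreover have "\<forall>l\<in>{1..Suc i}. d l \<in> Fq Q" using c Fq_uminus[OF Fq_1] by (auto simp: d_def)
  ultimately have "\<forall>l\<in>{1..Suc i}. d l = 0" using indep_mono[OF assms(1), of "Suc i"] assms(2) by auto
  then have "d (Suc i) = 0" by simp
  then show False by (simp add: d_def)
qed

lemma Psi_next_nz:
  assumes "Fq_lin_indep Q n (g::nat \<Rightarrow> 'a)" and "i < n"
  shows "poly (Psi Q g i) (g (Suc i)) \<noteq> 0"
proof
  assume z: "poly (Psi Q g i) (g (Suc i)) = 0"
  have "card (insert (g (Suc i)) (Fq_span Q i g)) \<le> degree (Psi Q g i)"
    by (rule roots_card_le[OF Psi_nonzero]) (use z Psi_vanish_span in auto)
  moreover have "card (insert (g (Suc i)) (Fq_span Q i g)) = Q ^ i + 1"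
    using not_in_span[OF assms] card_span[OF assms(1)] assms(2) by simp
  ultimately show False using deg_Psi[of g i] by simp
qed

lemma Psi_division:
  assumes "Fq_lin_indep Q n (g::nat \<Rightarrow> 'a)" and "i \<le> n"
    and "h \<in> linpolys Q" and "\<forall>l\<in>{1..i}. poly h (g l) = 0"
  shows "\<exists>\<beta>\<in>linpolys Q. h = pcompose \<beta> (Psi Q g i)"
  using assms(2,4)
proof (induction i)
  case 0 then show ?case using assms(3) by (intro bexI[of _ h]) auto
next
  case (Suc i)
  obtain \<beta>' where \<beta>': "\<beta>' \<in> linpolys Q" "h = pcompose \<beta>' (Psi Q g i)" using Suc by auto
  let ?a = "poly (Psi Q g i) (g (Suc i))"
  have r: "poly \<beta>' ?a = 0" using Suc.prems(2) \<beta>'(2) by (simp add: poly_pcompose)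
  have nz: "?a \<noteq> 0" using Psi_next_nz[OF assms(1)] Suc.prems(1) by simp
  obtain \<delta> where "\<delta> \<in> linpolys Q" "\<beta>' = pcompose \<delta> (Lp Q ?a)"
    using division_Lp[OF \<beta>'(1) r nz] by blast
  then show ?case using \<beta>'(2) by (auto simp: pcompose_assoc)
qed

lemma monic_diff_deg:
  assumes "degree (f::'a poly) = d" "degree h = d" "lead_coeff f = 1" "lead_coeff h = 1" "d > 0"
  shows "degree (f - h) < d"
proof -
  have "degree (f - h) \<le> d - 1"
  proof (rule degree_le, intro allI impI)
    fix k assume "d - 1 < k"
    then consider "k = d" | "k > d" by linarith
    then show "coeff (f - h) k = 0"
      by cases (use assms in \<open>auto simp: coeff_eq_0\<close>)
  qed
  then show ?thesis using assms(5) by simp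
qed

lemma Pi_eq_Psi:
  assumes "Fq_lin_indep Q n (g::nat \<Rightarrow> 'a)" and "i \<le> n"
  shows "Pi_poly Q i g = Psi Q g i"
proof (rule poly_eq_on[of _ _ "Fq_span Q i g"])
  let ?S = "Fq_span Q i g"
  have fin: "finite ?S" by simp
  have dPi: "degree (Pi_poly Q i g) = Q ^ i"
    unfolding Pi_poly_def using card_span[OF assms]
    by (subst degree_prod_sum_eq) auto
  have lPi: "lead_coeff (Pi_poly Q i g) = 1"
    unfolding Pi_poly_def by (simp add: lead_coeff_prod)
  have "degree (Pi_poly Q i g - Psi Q g i) < Q ^ i"
    by (rule monic_diff_deg[OF dPi _ lPi]) (use deg_Psi[of g i] Q_pos in auto)
  then show "degree (Pi_poly Q i g - Psi Q g i) < card ?S" using card_span[OF assms] by simp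
  show "\<forall>x\<in>?S. poly (Pi_poly Q i g) x = poly (Psi Q g i) x"
  proof
    fix x assume x: "x \<in> ?S"
    have "poly (Pi_poly Q i g) x = 0"
      unfolding Pi_poly_def poly_prod using x fin by (auto simp: prod_zero_iff intro!: bexI[of _ x])
    then show "poly (Pi_poly Q i g) x = poly (Psi Q g i) x" using Psi_vanish_span[OF x] by simp
  qed
qed


lemma moore_carrier: "moore Q i g \<in> carrier_mat i i" by (simp add: moore_def)

lemma moore_det_nz:
  assumes "Fq_lin_indep Q n (g::nat \<Rightarrow> 'a)" and "i \<le> n"
  shows "det (moore Q i g) \<noteq> 0"
proof
  let ?M = "moore Q i g"
  assume "det ?M = 0"
  then have "det (transpose_mat ?M) = 0" by (simp add: det_transpose[OF moore_carrier])
  then obtain v where v: "v \<in> carrier_vec i" "v \<noteq> 0\<^sub>v i" "transpose_mat ?M *\<^sub>v v = 0\<^sub>v i"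
    using det_0_iff_vec_prod_zero_field[of "transpose_mat ?M" i] moore_carrier by auto
  define h where "h = (\<Sum>a<i. monom (v $ a) (Q ^ a))"
  have injQ: "Q ^ a = Q ^ b \<Longrightarrow> a = b" for a b using Q_ge2 by (simp add: power_inject_exp)
  have hlin: "h \<in> linpolys Q" unfolding h_def by (intro lin_sum lin_monom)
  have coeffh: "coeff h (Q ^ a) = v $ a" if "a < i" for a
  proof -
    have "coeff h (Q ^ a) = (\<Sum>b<i. if b = a then v $ b else 0)"
      unfolding h_def coeff_sum
    proof (intro sum.cong refl)
      fix b show "coeff (monom (v $ b) (Q ^ b)) (Q ^ a) = (if b = a then v $ b else 0)"
        unfolding coeff_monom using injQ[of b a] by auto
    qed
    then show ?thesis using that by simp
  qed
  have degh: "degree h < Q ^ i \<or> h = 0"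
  proof (cases i)
    case 0 then show ?thesis by (simp add: h_def)
  next
    case (Suc i')
    have "degree h \<le> Q ^ i'"
    proof (rule degree_le, intro allI impI)
      fix k assume k: "Q ^ i' < k"
      have "Q ^ b \<noteq> k" if "b < i" for b
      proof -
        have "Q ^ b \<le> Q ^ i'" using that Suc Q_ge2 by (intro power_increasing) auto
        then show ?thesis using k by auto
      qed
      then show "coeff h k = 0" unfolding h_def coeff_sum by (simp add: coeff_monom)
    qed
    moreover have "Q ^ i' < Q ^ i" using Suc Q_ge2 by simp
    ultimately show ?thesis by simp
  qed
  have hroot: "\<forall>l\<in>{1..i}. poly h (g l) = 0"
  proof
    fix l assume l: "l \<in> {1..i}"
    then have b: "l - 1 < i" by auto
    have "0 = (transpose_mat ?M *\<^sub>v v) $ (l - 1)" using v(3) b by simp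
    also have "\<dots> = (\<Sum>a<i. ?M $$ (a, l - 1) * v $ a)"
      using b v(1) by (simp add: mult_mat_vec_def scalar_prod_def moore_def lessThan_atLeast0)
    also have "\<dots> = (\<Sum>a<i. v $ a * g l ^ (Q ^ a))"
      by (intro sum.cong refl) (use l in \<open>auto simp: moore_def\<close>)
    also have "\<dots> = poly h (g l)" by (simp add: h_def poly_sum poly_monom)
    finally show "poly h (g l) = 0" by simp
  qed
  obtain \<beta> where \<beta>: "\<beta> \<in> linpolys Q" "h = pcompose \<beta> (Psi Q g i)"
    using Psi_division[OF assms hlin hroot] by blast
  have "h = 0"
  proof (rule ccontr)
    assume hnz: "h \<noteq> 0"
    then have "\<beta> \<noteq> 0" using \<beta>(2) by auto
    have "degree \<beta> \<noteq> 0"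
    proof
      assume "degree \<beta> = 0"
      then have "\<beta> = [:coeff \<beta> 0:]" by (metis degree_0_id)
      then have "\<beta> = 0" using lin_coeff0[OF \<beta>(1)] by simp
      then show False using \<open>\<beta> \<noteq> 0\<close> by simp
    qed
    then have "degree h \<ge> Q ^ i" using \<beta>(2) deg_Psi[of g i] by (simp add: degree_pcompose)
    then show False using degh hnz by simp
  qed
  then have "v = 0\<^sub>v i"
    using coeffh v(1) by (intro eq_vecI) auto
  then show False using v(2) by simp
qed


lemma Dmat_carrier: "Dmat Q i g l \<in> carrier_mat i i" by (simp add: Dmat_def)

lemma Dmat_dims: "dim_row (Dmat Q i g l) = i" "dim_col (Dmat Q i g l) = i" by (simp_all add: Dmat_def)

lemma Dmat_entry: "a < i \<Longrightarrow> b < i \<Longrightarrow> Dmat Q i (g::nat\<Rightarrow>'a) l $$ (a, b) =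
   (if colD l b \<le> i then [: g (colD l b) ^ (Q ^ a) :] else monom 1 (Q ^ a))"
  by (simp add: Dmat_def moore_x_entry_def colD_def qpow_def)

lemma det_Dmat_lin:
  assumes "1 \<le> l" "l \<le> i"
  shows "det (Dmat Q i (g::nat\<Rightarrow>'a) l) \<in> linpolys Q"
proof -
  let ?A = "Dmat Q i g l"
  have i0: "i - 1 < i" using assms by simp
  have "det ?A = (\<Sum>a<i. ?A $$ (a, i - 1) * cofactor ?A a (i - 1))"
    by (rule laplace_expansion_column[OF Dmat_carrier i0])
  also have "\<dots> \<in> linpolys Q"
  proof (rule lin_sum)
    fix a assume a: "a \<in> {..<i}"
    have e: "?A $$ (a, i - 1) = monom 1 (Q ^ a)"
      using a assms i0 by (simp add: Dmat_entry colD_def)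
    have dd: "degree (det (mat_delete ?A a (i - 1))) \<le> 0 * (i - 1)"
    proof (rule degree_det_le)
      show "mat_delete ?A a (i - 1) \<in> carrier_mat (i - 1) (i - 1)"
        using mat_delete_carrier[OF Dmat_carrier] by blast
      fix a' b' assume a': "a' < i - 1" and b': "b' < i - 1"
      have "mat_delete ?A a (i - 1) $$ (a', b') = ?A $$ (if a' < a then a' else Suc a', b')"
        using a' b' by (simp add: mat_delete_def Dmat_def)
      also have "\<dots> = [: g (colD l b') ^ (Q ^ (if a' < a then a' else Suc a')) :]"
        using a' b' assms by (subst Dmat_entry) (auto simp: colD_def)
      finally show "degree (mat_delete ?A a (i - 1) $$ (a', b')) \<le> 0" by simp
    qed
    have "degree (cofactor ?A a (i - 1)) \<le> 0"
    proof -
      have "degree (cofactor ?A a (i - 1)) \<le> degree ((-1::'a poly) ^ (a + (i - 1))) + degree (det (mat_delete ?A a (i - 1)))"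
        unfolding cofactor_def by (rule degree_mult_le)
      moreover have "degree ((-1::'a poly) ^ (a + (i - 1))) \<le> 0"
        using degree_power_le[of "-1::'a poly" "a + (i - 1)"] by simp
      ultimately show ?thesis using dd by simp
    qed
    then obtain c where "cofactor ?A a (i - 1) = [:c:]" by (metis degree_0_id le_zero_eq)
    then show "?A $$ (a, i - 1) * cofactor ?A a (i - 1) \<in> linpolys Q"
      using e lin_monom by (simp add: lin_smult)
  qed
  finally show ?thesis .
qed

lemma lin_Lambda: "Lambda_poly Q i (g::nat\<Rightarrow>'a) r \<in> linpolys Q"
  unfolding Lambda_poly_def by (intro lin_sum lin_smult det_Dmat_lin) auto

lemma poly_det_Dmat: "poly (det (Dmat Q i (g::nat\<Rightarrow>'a) l)) x = det (Emat Q i g l x)"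
proof -
  have "poly (det (Dmat Q i g l)) x = det (map_mat (\<lambda>p. poly p x) (Dmat Q i g l))"
    using comm_ring_hom.hom_det[OF comm_ring_hom_poly] by metis
  also have "map_mat (\<lambda>p. poly p x) (Dmat Q i g l) = Emat Q i g l x"
    by (rule eq_matI) (auto simp: Emat_def Dmat_entry poly_monom Dmat_dims)
  finally show ?thesis .
qed

lemma det_Emat_other:
  assumes "1 \<le> l" "l \<le> i" "1 \<le> l'" "l' \<le> i" "l \<noteq> l'"
  shows "det (Emat Q i (g::nat\<Rightarrow>'a) l' (g l)) = 0"
proof -
  define b1 where "b1 = (if l < l' then l - 1 else l - 2)"
  have cb1: "colD l' b1 = l" and b1: "b1 < i - 1"
    using assms by (auto simp: b1_def colD_def)
  have ci: "colD l' (i - 1) = i + 1" using assms by (auto simp: colD_def)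
  show ?thesis
  proof (rule det_identical_columns[of _ i b1 "i - 1"])
    show "Emat Q i g l' (g l) \<in> carrier_mat i i" by (simp add: Emat_def)
    show "b1 \<noteq> i - 1" "b1 < i" "i - 1 < i" using b1 assms by auto
    show "col (Emat Q i g l' (g l)) b1 = col (Emat Q i g l' (g l)) (i - 1)"
      by (rule eq_vecI) (use b1 assms cb1 ci in \<open>auto simp: Emat_def\<close>)
  qed
qed

lemma det_Emat_same:
  assumes "1 \<le> l" "l \<le> i"
  shows "det (Emat Q i (g::nat\<Rightarrow>'a) l (g l)) = (-1) ^ (i - l) * det (moore Q i g)"
proof -
  have m: "i = (l - 1) + 1 + (i - l)" using assms by simp
  have aux: "\<And>j. j < i \<Longrightarrow> \<not> j < i - Suc 0 \<Longrightarrow> Suc (j + l - i) = l" using assms by auto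
  have "det (moore Q i g) = (- 1) ^ (1 * (i - l)) *
    det (mat i i (\<lambda>(a, b). moore Q i g $$ (a, if b < l - 1 then b else if b < l - 1 + (i - l) then b + 1 else b - (i - l))))"
    by (rule det_swap_final_cols[OF moore_carrier m])
  also have "mat i i (\<lambda>(a, b). moore Q i g $$ (a, if b < l - 1 then b else if b < l - 1 + (i - l) then b + 1 else b - (i - l)))
     = Emat Q i g l (g l)"
    by (rule eq_matI) (use assms in \<open>auto simp: Emat_def moore_def colD_def aux\<close>)
  finally have "det (moore Q i g) = (-1) ^ (i - l) * det (Emat Q i g l (g l))" by simp
  then show ?thesis by (simp flip: power_add add: mult.assoc[symmetric] power_even_eq[symmetric])
qed

lemma Lambda_interp:
  assumes "Fq_lin_indep Q n (g::nat \<Rightarrow> 'a)" and "i \<le> n" and "1 \<le> l" "l \<le> i"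
  shows "poly (Lambda_poly Q i g r) (g l) = r l"
proof -
  let ?d = "det (moore Q i g)"
  have dnz: "?d \<noteq> 0" using moore_det_nz[OF assms(1,2)] .
  let ?f = "\<lambda>l'. (-1) ^ (i - l') * r l' / ?d * det (Emat Q i g l' (g l))"
  have "poly (Lambda_poly Q i g r) (g l) = (\<Sum>l'=1..i. ?f l')"
    by (simp add: Lambda_poly_def poly_sum poly_det_Dmat)
  also have "\<dots> = ?f l + (\<Sum>l'\<in>{1..i}-{l}. ?f l')"
    using assms by (subst sum.remove[of _ l]) auto
  also have "(\<Sum>l'\<in>{1..i}-{l}. ?f l') = 0"
    by (rule sum.neutral) (use det_Emat_other[OF assms(3,4)] in auto)
  also have "?f l = r l"
  proof -
    define sg :: 'a where "sg = (-1) ^ (i - l)"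
    have sq: "sg * sg = 1" unfolding sg_def by (simp flip: power_mult_distrib)
    have "?f l = sg * r l / ?d * (sg * ?d)" using det_Emat_same[OF assms(3,4)] by (simp add: sg_def)
    also have "\<dots> = (sg * sg * r l) * ?d / ?d" by (simp add: ac_simps)
    also have "\<dots> = r l" using dnz sq by simp
    finally show ?thesis .
  qed
  finally show ?thesis by simp
qed


definition ok :: "nat \<Rightarrow> (nat \<Rightarrow> 'a) \<Rightarrow> (nat \<Rightarrow> 'a) \<Rightarrow> 'a poly \<times> 'a poly \<Rightarrow> bool" where
  "ok k g r f \<longleftrightarrow> fst f \<in> linpolys Q \<and> snd f \<in> linpolys Q \<and>
     (\<forall>l\<in>{1..k}. poly (fst f) (g l) + poly (snd f) (r l) = 0)"

lemma X_pcomp: "pcompose [:0, 1:] (q::'a poly) = q" by (simp add: pcompose_pCons)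

lemma M_char:
  assumes "Fq_lin_indep Q n (g::nat \<Rightarrow> 'a)" and "i \<le> n"
  shows "f \<in> interp_module Q i g r \<longleftrightarrow> ok i g r f"
proof
  have PiPsi: "Pi_poly Q i g = Psi Q g i" by (rule Pi_eq_Psi[OF assms])
  assume "f \<in> interp_module Q i g r"
  then obtain \<beta> \<gamma> where bg: "\<beta> \<in> linpolys Q" "\<gamma> \<in> linpolys Q"
    and f: "f = padd (pact \<beta> (Pi_poly Q i g, 0)) (pact \<gamma> (- Lambda_poly Q i g r, [:0, 1:]))"
    unfolding interp_module_def by blast
  have f1: "fst f = pcompose \<beta> (Psi Q g i) + pcompose \<gamma> (- Lambda_poly Q i g r)"
    using f PiPsi by (simp add: padd_def pact_def)
  have f2: "snd f = \<gamma>" using f lin_pcomp_0[OF bg(1)] by (simp add: padd_def pact_def)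
  show "ok i g r f" unfolding ok_def
  proof (intro conjI ballI)
    show "fst f \<in> linpolys Q" unfolding f1 using bg lin_Psi lin_Lambda by blast
    show "snd f \<in> linpolys Q" using f2 bg by simp
    fix l assume l: "l \<in> {1..i}"
    have "poly (fst f) (g l) = poly \<beta> (poly (Psi Q g i) (g l)) + poly \<gamma> (- poly (Lambda_poly Q i g r) (g l))"
      by (simp add: f1 poly_pcompose)
    also have "\<dots> = - poly \<gamma> (r l)"
      using l Psi_zero[of l i g] Lambda_interp[OF assms, of l r]
      by (simp add: lin_poly_0[OF bg(1)] lin_poly_uminus[OF bg(2)])
    finally show "poly (fst f) (g l) + poly (snd f) (r l) = 0" using f2 by simp
  qed
next
  have PiPsi: "Pi_poly Q i g = Psi Q g i" by (rule Pi_eq_Psi[OF assms])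
  assume "ok i g r f"
  then have f1: "fst f \<in> linpolys Q" and f2: "snd f \<in> linpolys Q"
    and van: "\<forall>l\<in>{1..i}. poly (fst f) (g l) + poly (snd f) (r l) = 0" by (auto simp: ok_def)
  define h where "h = fst f + pcompose (snd f) (Lambda_poly Q i g r)"
  have hlin: "h \<in> linpolys Q" unfolding h_def using f1 f2 lin_Lambda by blast
  have hvan: "\<forall>l\<in>{1..i}. poly h (g l) = 0"
    using van Lambda_interp[OF assms] by (auto simp: h_def poly_pcompose)
  obtain \<beta> where \<beta>: "\<beta> \<in> linpolys Q" "h = pcompose \<beta> (Psi Q g i)"
    using Psi_division[OF assms hlin hvan] by blast
  have "f = padd (pact \<beta> (Pi_poly Q i g, 0)) (pact (snd f) (- Lambda_poly Q i g r, [:0, 1:]))"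
  proof -
    have "fst f = pcompose \<beta> (Psi Q g i) + pcompose (snd f) (- Lambda_poly Q i g r)"
      using \<beta>(2) lin_pcomp_uminus[OF f2] by (simp add: h_def eq_diff_eq[symmetric])
    moreover have "snd f = pcompose \<beta> 0 + pcompose (snd f) [:0, 1:]"
      using lin_pcomp_0[OF \<beta>(1)] by simp
    ultimately show ?thesis using PiPsi by (cases f) (simp add: padd_def pact_def)
  qed
  then show "f \<in> interp_module Q i g r" unfolding interp_module_def using \<beta>(1) f2 by blast
qed

lemma comb_eval:
  assumes "(a1::'a poly) \<in> linpolys Q" "a2 \<in> linpolys Q"
  shows "poly (fst (padd (pact a1 F1) (pact a2 F2))) x + poly (snd (padd (pact a1 F1) (pact a2 F2))) y
    = poly a1 (poly (fst F1) x + poly (snd F1) y) + poly a2 (poly (fst F2) x + poly (snd F2) y)"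
  by (simp add: padd_def pact_def poly_pcompose lin_poly_add[OF assms(1)] lin_poly_add[OF assms(2)] algebra_simps)

lemma ok_comb:
  assumes "(a1::'a poly) \<in> linpolys Q" "a2 \<in> linpolys Q" "ok k g r F1" "ok k g r F2"
  shows "ok k g r (padd (pact a1 F1) (pact a2 F2))"
  unfolding ok_def
proof (intro conjI ballI)
  show "fst (padd (pact a1 F1) (pact a2 F2)) \<in> linpolys Q"
    using assms by (auto simp: ok_def padd_def pact_def)
  show "snd (padd (pact a1 F1) (pact a2 F2)) \<in> linpolys Q"
    using assms by (auto simp: ok_def padd_def pact_def)
  fix l assume "l \<in> {1..k}"
  then show "poly (fst (padd (pact a1 F1) (pact a2 F2))) (g l) + poly (snd (padd (pact a1 F1) (pact a2 F2))) (r l) = 0"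
    using assms by (simp add: comb_eval ok_def lin_poly_0)
qed

lemma comb_assoc:
  assumes "(b1::'a poly) \<in> linpolys Q" "b2 \<in> linpolys Q"
  shows "padd (pact b1 (padd (pact c11 F1) (pact c12 F2))) (pact b2 (padd (pact c21 F1) (pact c22 F2)))
    = padd (pact (pcompose b1 c11 + pcompose b2 c21) F1) (pact (pcompose b1 c12 + pcompose b2 c22) F2)"
  by (simp add: padd_def pact_def lin_pcomp_add[OF assms(1)] lin_pcomp_add[OF assms(2)] pcompose_add pcompose_assoc algebra_simps)

lemma neg_X: "- [:0, c:] = [:0, - c::'a:]" by simp

lemma lin_comp_scal: "pcompose [:0, c:] [:0, d:] = [:0, c * d::'a:]"
  by (simp add: pcompose_pCons)

lemma pcomp_scal_eq0: "pcompose (b::'a poly) [:0, c:] = 0 \<Longrightarrow> c \<noteq> 0 \<Longrightarrow> b = 0"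
  by (rule pcompose_eq_0) auto

lemma pcomp_Lp_eq0: "pcompose (b::'a poly) (Lp Q c) = 0 \<Longrightarrow> b = 0"
  by (rule pcompose_eq_0) (use degree_Lp Q_pos in auto)


lemma ok_step:
  assumes "ok (i - 1) g r F" "1 \<le> i" "poly (fst F) (g i) + poly (snd F) (r i) = 0"
  shows "ok i g r F"
proof -
  have "l \<in> {1..i} \<Longrightarrow> l \<in> {1..i-1} \<or> l = i" for l by auto
  then show ?thesis using assms unfolding ok_def by blast
qed

lemma ok_down: "ok i g r F \<Longrightarrow> ok (i - 1) g r F"
  unfolding ok_def by auto

lemma main:
  fixes g r :: "nat \<Rightarrow> 'a" and n i :: nat and P K N D :: "'a poly"
  assumes indep: "Fq_lin_indep Q n g"
    and i1: "1 \<le> i" and "i \<le> n"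
    and linP: "P \<in> linpolys Q" and linK: "K \<in> linpolys Q" and linN: "N \<in> linpolys Q" and linD: "D \<in> linpolys Q"
    and basis: "is_basis2 Q (interp_module Q (i - 1) g r) (P, - K) (N, - D)"
  defines "\<Gamma> \<equiv> poly P (g i) - poly K (r i)"
    and "\<Delta> \<equiv> poly N (g i) - poly D (r i)"
  shows "(\<Gamma> \<noteq> 0 \<longrightarrow>
           (let R = mat2_comp ((monom 1 Q - smult (\<Gamma> ^ (Q - 1)) [:0, 1:], 0),
                               ([:0, \<Delta>:], - [:0, \<Gamma>:])) ((P, - K), (N, - D))
            in is_basis2 Q (interp_module Q i g r) (fst R) (snd R)))
       \<and> (\<Delta> \<noteq> 0 \<longrightarrow>
           (let R = mat2_comp (([:0, \<Delta>:], - [:0, \<Gamma>:]),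
                               (0, monom 1 Q - smult (\<Delta> ^ (Q - 1)) [:0, 1:])) ((P, - K), (N, - D))
            in is_basis2 Q (interp_module Q i g r) (fst R) (snd R)))"
proof -
  define R1 where "R1 = (P, - K)"
  define R2 where "R2 = (N, - D)"
  have char0: "f \<in> interp_module Q (i - 1) g r \<longleftrightarrow> ok (i - 1) g r f" for f
    by (rule M_char[OF indep]) (use assms in auto)
  have char1: "f \<in> interp_module Q i g r \<longleftrightarrow> ok i g r f" for f
    by (rule M_char[OF indep]) (use assms in auto)
  have span0: "interp_module Q (i - 1) g r = {padd (pact a1 R1) (pact a2 R2) | a1 a2. a1 \<in> linpolys Q \<and> a2 \<in> linpolys Q}"
    and ind0: "\<And>a1 a2. a1 \<in> linpolys Q \<Longrightarrow> a2 \<in> linpolys Q \<Longrightarrow> padd (pact a1 R1) (pact a2 R2) = (0, 0) \<Longrightarrow> a1 = 0 \<and> a2 = 0"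
    using basis unfolding is_basis2_def R1_def R2_def by blast+
  have "R1 = padd (pact [:0, 1:] R1) (pact 0 R2)"
    by (simp add: R1_def R2_def padd_def pact_def X_pcomp)
  then have "R1 \<in> interp_module Q (i - 1) g r" unfolding span0 using lin_X[of 1] lin_zero by blast
  then have ok1: "ok (i - 1) g r R1" using char0 by blast
  have "R2 = padd (pact 0 R1) (pact [:0, 1:] R2)"
    by (simp add: R1_def R2_def padd_def pact_def X_pcomp)
  then have "R2 \<in> interp_module Q (i - 1) g r" unfolding span0 using lin_X[of 1] lin_zero by blast
  then have ok2: "ok (i - 1) g r R2" using char0 by blast
  have ev1: "poly (fst R1) (g i) + poly (snd R1) (r i) = \<Gamma>" by (simp add: R1_def \<Gamma>_def)
  have ev2: "poly (fst R2) (g i) + poly (snd R2) (r i) = \<Delta>" by (simp add: R2_def \<Delta>_def)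
  have evc: "poly (fst (padd (pact a1 R1) (pact a2 R2))) (g i) + poly (snd (padd (pact a1 R1) (pact a2 R2))) (r i)
      = poly a1 \<Gamma> + poly a2 \<Delta>" if "a1 \<in> linpolys Q" "a2 \<in> linpolys Q" for a1 a2
    using comb_eval[OF that] ev1 ev2 by simp
  have okc: "ok i g r (padd (pact a1 R1) (pact a2 R2))"
    if "a1 \<in> linpolys Q" "a2 \<in> linpolys Q" "poly a1 \<Gamma> + poly a2 \<Delta> = 0" for a1 a2
    by (rule ok_step[OF ok_comb[OF that(1,2) ok1 ok2] i1]) (use evc[OF that(1,2)] that(3) in simp)
  have crit: "is_basis2 Q (interp_module Q i g r) (padd (pact c11 R1) (pact c12 R2)) (padd (pact c21 R1) (pact c22 R2))"
    if lc: "c11 \<in> linpolys Q" "c12 \<in> linpolys Q" "c21 \<in> linpolys Q" "c22 \<in> linpolys Q"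
      and e1: "poly c11 \<Gamma> + poly c12 \<Delta> = 0" and e2: "poly c21 \<Gamma> + poly c22 \<Delta> = 0"
      and surj: "\<And>a1 a2. a1 \<in> linpolys Q \<Longrightarrow> a2 \<in> linpolys Q \<Longrightarrow> poly a1 \<Gamma> + poly a2 \<Delta> = 0 \<Longrightarrow>
          \<exists>b1\<in>linpolys Q. \<exists>b2\<in>linpolys Q. pcompose b1 c11 + pcompose b2 c21 = a1 \<and> pcompose b1 c12 + pcompose b2 c22 = a2"
      and inj: "\<And>b1 b2. b1 \<in> linpolys Q \<Longrightarrow> b2 \<in> linpolys Q \<Longrightarrow>
          pcompose b1 c11 + pcompose b2 c21 = 0 \<Longrightarrow> pcompose b1 c12 + pcompose b2 c22 = 0 \<Longrightarrow> b1 = 0 \<and> b2 = 0"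
    for c11 c12 c21 c22
  proof -
    let ?S1 = "padd (pact c11 R1) (pact c12 R2)"
    let ?S2 = "padd (pact c21 R1) (pact c22 R2)"
    have okS1: "ok i g r ?S1" by (rule okc[OF lc(1,2) e1])
    have okS2: "ok i g r ?S2" by (rule okc[OF lc(3,4) e2])
    have ca: "padd (pact b1 ?S1) (pact b2 ?S2) = padd (pact (pcompose b1 c11 + pcompose b2 c21) R1) (pact (pcompose b1 c12 + pcompose b2 c22) R2)"
      if "b1 \<in> linpolys Q" "b2 \<in> linpolys Q" for b1 b2
      by (rule comb_assoc[OF that])
    show ?thesis unfolding is_basis2_def
    proof (rule conjI)
      show "interp_module Q i g r = {padd (pact b1 ?S1) (pact b2 ?S2) | b1 b2. b1 \<in> linpolys Q \<and> b2 \<in> linpolys Q}"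
      proof
        show "interp_module Q i g r \<subseteq> {padd (pact b1 ?S1) (pact b2 ?S2) | b1 b2. b1 \<in> linpolys Q \<and> b2 \<in> linpolys Q}"
        proof
          fix f assume "f \<in> interp_module Q i g r"
          then have okf: "ok i g r f" using char1 by blast
          then have "f \<in> interp_module Q (i - 1) g r" using char0 ok_down by blast
          then obtain a1 a2 where a: "a1 \<in> linpolys Q" "a2 \<in> linpolys Q" and f: "f = padd (pact a1 R1) (pact a2 R2)"
            unfolding span0 by blast
          have "poly a1 \<Gamma> + poly a2 \<Delta> = 0" using okf evc[OF a] f i1 unfolding ok_def by auto
          then obtain b1 b2 where b: "b1 \<in> linpolys Q" "b2 \<in> linpolys Q"
            and bb: "pcompose b1 c11 + pcompose b2 c21 = a1" "pcompose b1 c12 + pcompose b2 c22 = a2"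
            using surj[OF a] by blast
          have "f = padd (pact b1 ?S1) (pact b2 ?S2)" using ca[OF b] bb f by simp
          then show "f \<in> {padd (pact b1 ?S1) (pact b2 ?S2) | b1 b2. b1 \<in> linpolys Q \<and> b2 \<in> linpolys Q}"
            using b by blast
        qed
      next
        show "{padd (pact b1 ?S1) (pact b2 ?S2) | b1 b2. b1 \<in> linpolys Q \<and> b2 \<in> linpolys Q} \<subseteq> interp_module Q i g r"
          using ok_comb okS1 okS2 char1 by blast
      qed
    next
      show "\<forall>b1\<in>linpolys Q. \<forall>b2\<in>linpolys Q. padd (pact b1 ?S1) (pact b2 ?S2) = (0, 0) \<longrightarrow> b1 = 0 \<and> b2 = 0"
      proof (intro ballI impI)
        fix b1 b2 assume b: "b1 \<in> linpolys Q" "b2 \<in> linpolys Q"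
          and z: "padd (pact b1 ?S1) (pact b2 ?S2) = (0, 0)"
        have "pcompose b1 c11 + pcompose b2 c21 = 0 \<and> pcompose b1 c12 + pcompose b2 c22 = 0"
          by (rule ind0[OF lin_add[OF lin_pcomp[OF b(1) lc(1)] lin_pcomp[OF b(2) lc(3)]]
                          lin_add[OF lin_pcomp[OF b(1) lc(2)] lin_pcomp[OF b(2) lc(4)]]])
           (use ca[OF b] z in simp)
        then show "b1 = 0 \<and> b2 = 0" using inj[OF b] by blast
      qed
    qed
  qed
  have part1: "\<Gamma> \<noteq> 0 \<longrightarrow> is_basis2 Q (interp_module Q i g r)
      (padd (pact (Lp Q \<Gamma>) R1) (pact 0 R2)) (padd (pact [:0, \<Delta>:] R1) (pact (- [:0, \<Gamma>:]) R2))"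
  proof
    assume G: "\<Gamma> \<noteq> 0"
    show "is_basis2 Q (interp_module Q i g r)
      (padd (pact (Lp Q \<Gamma>) R1) (pact 0 R2)) (padd (pact [:0, \<Delta>:] R1) (pact (- [:0, \<Gamma>:]) R2))"
    proof (rule crit)
      show "Lp Q \<Gamma> \<in> linpolys Q" "0 \<in> linpolys Q" "[:0, \<Delta>:] \<in> linpolys Q" "- [:0, \<Gamma>:] \<in> linpolys Q"
        by (rule lin_Lp, rule lin_zero, rule lin_X, rule lin_uminus[OF lin_X])
      show "poly (Lp Q \<Gamma>) \<Gamma> + poly 0 \<Delta> = 0" by (simp add: Lp_root)
      show "poly [:0, \<Delta>:] \<Gamma> + poly (- [:0, \<Gamma>:]) \<Delta> = 0" by simp
    next
      fix a1 a2 assume a: "a1 \<in> linpolys Q" "a2 \<in> linpolys Q" and e: "poly a1 \<Gamma> + poly a2 \<Delta> = 0"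
      define b2 where "b2 = pcompose a2 [:0, - 1 / \<Gamma>:]"
      define h where "h = a1 - pcompose b2 [:0, \<Delta>:]"
      have b2l: "b2 \<in> linpolys Q" unfolding b2_def by (rule lin_pcomp[OF a(2) lin_X])
      have hl: "h \<in> linpolys Q" unfolding h_def by (rule lin_diff[OF a(1) lin_pcomp[OF b2l lin_X]])
      have "poly h \<Gamma> = poly a1 \<Gamma> - poly a2 (- 1 / \<Gamma> * (\<Delta> * \<Gamma>))"
        by (simp add: h_def b2_def poly_pcompose)
      also have "- 1 / \<Gamma> * (\<Delta> * \<Gamma>) = - \<Delta>" using G by (simp add: field_simps)
      finally have "poly h \<Gamma> = 0" using e lin_poly_uminus[OF a(2)] by simp
      then obtain b1 where b1: "b1 \<in> linpolys Q" "h = pcompose b1 (Lp Q \<Gamma>)"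
        using division_Lp[OF hl _ G] by blast
      have "pcompose b1 (Lp Q \<Gamma>) + pcompose b2 [:0, \<Delta>:] = a1" using b1(2) unfolding h_def by (metis diff_add_cancel)
      moreover have "pcompose b1 0 + pcompose b2 (- [:0, \<Gamma>:]) = a2"
      proof -
        have "pcompose b2 (- [:0, \<Gamma>:]) = pcompose a2 (pcompose [:0, - 1 / \<Gamma>:] [:0, - \<Gamma>:])"
          by (simp add: b2_def pcompose_assoc)
        also have "\<dots> = a2" using G by (simp add: lin_comp_scal)
        finally show ?thesis using lin_pcomp_0[OF b1(1)] by simp
      qed
      ultimately show "\<exists>b1\<in>linpolys Q. \<exists>b2\<in>linpolys Q. pcompose b1 (Lp Q \<Gamma>) + pcompose b2 [:0, \<Delta>:] = a1 \<and>
          pcompose b1 0 + pcompose b2 (- [:0, \<Gamma>:]) = a2" using b1(1) b2l by blast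
    next
      fix b1 b2 assume b: "b1 \<in> linpolys Q" "b2 \<in> linpolys Q"
        and z1: "pcompose b1 (Lp Q \<Gamma>) + pcompose b2 [:0, \<Delta>:] = 0"
        and z2: "pcompose b1 0 + pcompose b2 (- [:0, \<Gamma>:]) = 0"
      have "pcompose b2 [:0, - \<Gamma>:] = 0" using z2 lin_pcomp_0[OF b(1)] by (simp add: neg_X)
      moreover have "- \<Gamma> \<noteq> 0" using G by simp
      ultimately have "b2 = 0" by (rule pcomp_scal_eq0)
      then have "pcompose b1 (Lp Q \<Gamma>) = 0" using z1 by simp
      then show "b1 = 0 \<and> b2 = 0" using pcomp_Lp_eq0 \<open>b2 = 0\<close> by blast
    qed
  qed
  have part2: "\<Delta> \<noteq> 0 \<longrightarrow> is_basis2 Q (interp_module Q i g r)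
      (padd (pact [:0, \<Delta>:] R1) (pact (- [:0, \<Gamma>:]) R2)) (padd (pact 0 R1) (pact (Lp Q \<Delta>) R2))"
  proof
    assume G: "\<Delta> \<noteq> 0"
    show "is_basis2 Q (interp_module Q i g r)
      (padd (pact [:0, \<Delta>:] R1) (pact (- [:0, \<Gamma>:]) R2)) (padd (pact 0 R1) (pact (Lp Q \<Delta>) R2))"
    proof (rule crit)
      show "Lp Q \<Delta> \<in> linpolys Q" "0 \<in> linpolys Q" "[:0, \<Delta>:] \<in> linpolys Q" "- [:0, \<Gamma>:] \<in> linpolys Q"
        by (rule lin_Lp, rule lin_zero, rule lin_X, rule lin_uminus[OF lin_X])
      show "poly 0 \<Gamma> + poly (Lp Q \<Delta>) \<Delta> = 0" by (simp add: Lp_root)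
      show "poly [:0, \<Delta>:] \<Gamma> + poly (- [:0, \<Gamma>:]) \<Delta> = 0" by simp
    next
      fix a1 a2 assume a: "a1 \<in> linpolys Q" "a2 \<in> linpolys Q" and e: "poly a1 \<Gamma> + poly a2 \<Delta> = 0"
      define b1 where "b1 = pcompose a1 [:0, 1 / \<Delta>:]"
      define h where "h = a2 - pcompose b1 (- [:0, \<Gamma>:])"
      have b1l: "b1 \<in> linpolys Q" unfolding b1_def by (rule lin_pcomp[OF a(1) lin_X])
      have hl: "h \<in> linpolys Q" unfolding h_def by (rule lin_diff[OF a(2) lin_pcomp[OF b1l lin_uminus[OF lin_X]]])
      have "poly h \<Delta> = poly a2 \<Delta> - poly a1 (1 / \<Delta> * (- (\<Gamma> * \<Delta>)))"
        by (simp add: h_def b1_def poly_pcompose)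
      also have "1 / \<Delta> * (- (\<Gamma> * \<Delta>)) = - \<Gamma>" using G by (simp add: field_simps)
      finally have "poly h \<Delta> = 0" using e lin_poly_uminus[OF a(1)] by (simp add: algebra_simps)
      then obtain b2 where b2: "b2 \<in> linpolys Q" "h = pcompose b2 (Lp Q \<Delta>)"
        using division_Lp[OF hl _ G] by blast
      have "pcompose b1 (- [:0, \<Gamma>:]) + pcompose b2 (Lp Q \<Delta>) = a2" using b2(2) unfolding h_def by (metis add.commute diff_add_cancel)
      moreover have "pcompose b1 [:0, \<Delta>:] + pcompose b2 0 = a1"
      proof -
        have "pcompose b1 [:0, \<Delta>:] = pcompose a1 (pcompose [:0, 1 / \<Delta>:] [:0, \<Delta>:])"
          by (simp add: b1_def pcompose_assoc)
        also have "\<dots> = a1" using G by (simp add: lin_comp_scal)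
        finally show ?thesis using lin_pcomp_0[OF b2(1)] by simp
      qed
      ultimately show "\<exists>b1\<in>linpolys Q. \<exists>b2\<in>linpolys Q. pcompose b1 [:0, \<Delta>:] + pcompose b2 0 = a1 \<and>
          pcompose b1 (- [:0, \<Gamma>:]) + pcompose b2 (Lp Q \<Delta>) = a2" using b2(1) b1l by blast
    next
      fix b1 b2 assume b: "b1 \<in> linpolys Q" "b2 \<in> linpolys Q"
        and z1: "pcompose b1 [:0, \<Delta>:] + pcompose b2 0 = 0"
        and z2: "pcompose b1 (- [:0, \<Gamma>:]) + pcompose b2 (Lp Q \<Delta>) = 0"
      have "pcompose b1 [:0, \<Delta>:] = 0" using z1 lin_pcomp_0[OF b(2)] by simp
      then have "b1 = 0" using G by (rule pcomp_scal_eq0)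
      then have "pcompose b2 (Lp Q \<Delta>) = 0" using z2 by simp
      then show "b1 = 0 \<and> b2 = 0" using pcomp_Lp_eq0 \<open>b1 = 0\<close> by blast
    qed
  qed
  show ?thesis unfolding Let_def mat2_comp_def fst_conv snd_conv Lp_def[symmetric]
    using part1 part2 unfolding R1_def R2_def by (rule conjI)
qed

end

theorem lemma26:
  fixes g r :: "nat \<Rightarrow> 'a::{field, finite}"
    and Q m n i :: nat and P K N D :: "'a poly"
  assumes "\<exists>p k. prime p \<and> k > 0 \<and> Q = p ^ k"
    and "m \<ge> 1" and "card (UNIV :: 'a set) = Q ^ m"
    and "Fq_lin_indep Q n g"
    and "1 \<le> i" and "i \<le> n"
    and "P \<in> linpolys Q" and "K \<in> linpolys Q" and "N \<in> linpolys Q" and "D \<in> linpolys Q"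
    and "is_basis2 Q (interp_module Q (i - 1) g r) (P, - K) (N, - D)"
  defines "\<Gamma> \<equiv> poly P (g i) - poly K (r i)"
    and "\<Delta> \<equiv> poly N (g i) - poly D (r i)"
  shows "(\<Gamma> \<noteq> 0 \<longrightarrow>
           (let R = mat2_comp ((monom 1 Q - smult (\<Gamma> ^ (Q - 1)) [:0, 1:], 0),
                               ([:0, \<Delta>:], - [:0, \<Gamma>:])) ((P, - K), (N, - D))
            in is_basis2 Q (interp_module Q i g r) (fst R) (snd R)))
       \<and> (\<Delta> \<noteq> 0 \<longrightarrow>
           (let R = mat2_comp (([:0, \<Delta>:], - [:0, \<Gamma>:]),
                               (0, monom 1 Q - smult (\<Delta> ^ (Q - 1)) [:0, 1:])) ((P, - K), (N, - D))
            in is_basis2 Q (interp_module Q i g r) (fst R) (snd R)))"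
proof -
  obtain p e where pe: "prime p" "e > 0" "Q = p ^ e" using assms(1) by blast
  interpret lq Q p e m "TYPE('a)"
    by unfold_locales (use pe assms(2,3) in auto)
  show ?thesis unfolding \<Gamma>_def \<Delta>_def
    by (rule main[OF assms(4-11)])
qed

end
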